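(* Let $\mathbb{C}$ be a regular category. If the Pairwise Chinese Remainder Theorem holds in $\mathbb{C}$, then $\mathbb{C}$ has finite 2-fold subobject decompositions.
   Context: A category is regular if it has finite limits and coequalizers of kernel pairs and regular epimorphisms are pullback-stable; the image of a subobject under a morphism is given by regular epi–mono factorization. For $w:S\to W$ and subobject $A$ of $W$, $w\in_S A$ means $w$ factors through a representative of $A$. For an equivalence relation $\theta$ on $X$ and $a,b:S\to X$, $a\equiv b\bmod\theta$ means $(a,b)\in_S\theta$. An equivalence relation is effective if it is the kernel pair of some morphism. Given $a_1,\dots,a_m:S\to X$ and equivalence relations $\theta_1,\dots,\theta_m$ on $X$, the system $x\equiv a_i\bmod\theta_i$ ($i=1,\dots,m$) is approximately solvable if there are a regular epimorphism $\alpha:Q\to S$ and a morphism $a:Q\to X$ with $a\equiv a_i\alpha\bmod\theta_i$ for all $i$; it is approximately pairwise solvable if for all $i,j$ the two-equation subsystem for $i,j$ is approximately solvable. The Pairwise Chinese Remainder Theorem holds in $\mathbb{C}$ if for every object $X$, every $m$, all $a_1,\dots,a_m:S\to X$ and all effective equivalence relations $\theta_1,\dots,\theta_m$ on $X$, approximate pairwise solvability implies approximate solvability. $\mathbb{C}$ has finite 2-fold subobject decompositions if for every positive integer $n$, all objects $A_1,\dots,A_n$ and all subobjects $S,T$ of $A_1\times\cdots\times A_n$: if for all $i,j\in\{1,\dots,n\}$ the images of $S$ and $T$ under $(\pi_i,\pi_j):A_1\times\cdots\times A_n\to A_i\times A_j$ coincide, then $S=T$. *)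

theory Defs
  imports Main
begin

text \<open>Elementary (arrows-only-with-objects) categories, given explicitly as a record.
  Cmp C g f denotes the composite g after f (defined when Cod f = Dom g).\<close>

record ('o, 'a) category =
  Obj :: "'o set"
  Arr :: "'a set"
  Dom :: "'a \<Rightarrow> 'o"
  Cod :: "'a \<Rightarrow> 'o"
  Idt :: "'o \<Rightarrow> 'a"
  Cmp :: "'a \<Rightarrow> 'a \<Rightarrow> 'a"

definition hom :: "('o, 'a, 'z) category_scheme \<Rightarrow> 'o \<Rightarrow> 'o \<Rightarrow> 'a set" where
  "hom C X Y = {f \<in> Arr C. Dom C f = X \<and> Cod C f = Y}"

definition is_category :: "('o, 'a, 'z) category_scheme \<Rightarrow> bool" where
  "is_category C \<longleftrightarrow>
     (\<forall>f \<in> Arr C. Dom C f \<in> Obj C \<and> Cod C f \<in> Obj C) \<and>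
     (\<forall>X \<in> Obj C. Idt C X \<in> hom C X X) \<and>
     (\<forall>f \<in> Arr C. \<forall>g \<in> Arr C. Cod C f = Dom C g \<longrightarrow>
         Cmp C g f \<in> hom C (Dom C f) (Cod C g)) \<and>
     (\<forall>f \<in> Arr C. Cmp C f (Idt C (Dom C f)) = f \<and> Cmp C (Idt C (Cod C f)) f = f) \<and>
     (\<forall>f \<in> Arr C. \<forall>g \<in> Arr C. \<forall>h \<in> Arr C. Cod C f = Dom C g \<and> Cod C g = Dom C h \<longrightarrow>
         Cmp C h (Cmp C g f) = Cmp C (Cmp C h g) f)"

definition mono :: "('o, 'a, 'z) category_scheme \<Rightarrow> 'a \<Rightarrow> bool" where
  "mono C m \<longleftrightarrow> m \<in> Arr C \<and>
     (\<forall>g h. g \<in> Arr C \<and> h \<in> Arr C \<and> Cod C g = Dom C m \<and> Cod C h = Dom C m \<and>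
            Dom C g = Dom C h \<and> Cmp C m g = Cmp C m h \<longrightarrow> g = h)"

definition coequalizer :: "('o, 'a, 'z) category_scheme \<Rightarrow> 'a \<Rightarrow> 'a \<Rightarrow> 'a \<Rightarrow> bool" where
  "coequalizer C u v e \<longleftrightarrow>
     u \<in> Arr C \<and> v \<in> Arr C \<and> e \<in> Arr C \<and>
     Dom C u = Dom C v \<and> Cod C u = Cod C v \<and> Dom C e = Cod C u \<and>
     Cmp C e u = Cmp C e v \<and>
     (\<forall>Y h. Y \<in> Obj C \<and> h \<in> hom C (Dom C e) Y \<and> Cmp C h u = Cmp C h v \<longrightarrow>
        (\<exists>!k. k \<in> hom C (Cod C e) Y \<and> Cmp C k e = h))"

definition regular_epi :: "('o, 'a, 'z) category_scheme \<Rightarrow> 'a \<Rightarrow> bool" where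
  "regular_epi C e \<longleftrightarrow> (\<exists>u v. coequalizer C u v e)"

definition pullback :: "('o, 'a, 'z) category_scheme \<Rightarrow> 'a \<Rightarrow> 'a \<Rightarrow> 'a \<Rightarrow> 'a \<Rightarrow> bool" where
  "pullback C f g p q \<longleftrightarrow>
     f \<in> Arr C \<and> g \<in> Arr C \<and> p \<in> Arr C \<and> q \<in> Arr C \<and>
     Cod C f = Cod C g \<and> Dom C p = Dom C q \<and> Cod C p = Dom C f \<and> Cod C q = Dom C g \<and>
     Cmp C f p = Cmp C g q \<and>
     (\<forall>W x y. W \<in> Obj C \<and> x \<in> hom C W (Dom C f) \<and> y \<in> hom C W (Dom C g) \<and>
              Cmp C f x = Cmp C g y \<longrightarrow>
        (\<exists>!u. u \<in> hom C W (Dom C p) \<and> Cmp C p u = x \<and> Cmp C q u = y))"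

definition kernel_pair :: "('o, 'a, 'z) category_scheme \<Rightarrow> 'a \<Rightarrow> 'a \<Rightarrow> 'a \<Rightarrow> bool" where
  "kernel_pair C f p q \<longleftrightarrow> pullback C f f p q"

definition has_terminal :: "('o, 'a, 'z) category_scheme \<Rightarrow> bool" where
  "has_terminal C \<longleftrightarrow> (\<exists>T \<in> Obj C. \<forall>X \<in> Obj C. \<exists>!f. f \<in> hom C X T)"

definition has_finite_limits :: "('o, 'a, 'z) category_scheme \<Rightarrow> bool" where
  "has_finite_limits C \<longleftrightarrow> has_terminal C \<and>
     (\<forall>f \<in> Arr C. \<forall>g \<in> Arr C. Cod C f = Cod C g \<longrightarrow> (\<exists>p q. pullback C f g p q))"

definition regular_category :: "('o, 'a, 'z) category_scheme \<Rightarrow> bool" where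
  "regular_category C \<longleftrightarrow> is_category C \<and> has_finite_limits C \<and>
     (\<forall>f p q. kernel_pair C f p q \<longrightarrow> (\<exists>e. coequalizer C p q e)) \<and>
     (\<forall>e g p q. regular_epi C e \<and> pullback C e g p q \<longrightarrow> regular_epi C q)"

definition binary_product :: "('o, 'a, 'z) category_scheme \<Rightarrow> 'o \<Rightarrow> 'o \<Rightarrow> 'o \<Rightarrow> 'a \<Rightarrow> 'a \<Rightarrow> bool" where
  "binary_product C A B P p q \<longleftrightarrow>
     A \<in> Obj C \<and> B \<in> Obj C \<and> P \<in> Obj C \<and> p \<in> hom C P A \<and> q \<in> hom C P B \<and>
     (\<forall>W x y. W \<in> Obj C \<and> x \<in> hom C W A \<and> y \<in> hom C W B \<longrightarrow>
        (\<exists>!u. u \<in> hom C W P \<and> Cmp C p u = x \<and> Cmp C q u = y))"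

definition nary_product :: "('o, 'a, 'z) category_scheme \<Rightarrow> nat \<Rightarrow> (nat \<Rightarrow> 'o) \<Rightarrow> 'o \<Rightarrow> (nat \<Rightarrow> 'a) \<Rightarrow> bool" where
  "nary_product C n A P \<pi> \<longleftrightarrow>
     (\<forall>i < n. A i \<in> Obj C) \<and> P \<in> Obj C \<and> (\<forall>i < n. \<pi> i \<in> hom C P (A i)) \<and>
     (\<forall>W f. W \<in> Obj C \<and> (\<forall>i < n. f i \<in> hom C W (A i)) \<longrightarrow>
        (\<exists>!u. u \<in> hom C W P \<and> (\<forall>i < n. Cmp C (\<pi> i) u = f i)))"

definition same_subobject :: "('o, 'a, 'z) category_scheme \<Rightarrow> 'a \<Rightarrow> 'a \<Rightarrow> bool" where
  "same_subobject C m n \<longleftrightarrow> mono C m \<and> mono C n \<and> Cod C m = Cod C n \<and>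
     (\<exists>u. u \<in> hom C (Dom C m) (Dom C n) \<and> Cmp C n u = m) \<and>
     (\<exists>v. v \<in> hom C (Dom C n) (Dom C m) \<and> Cmp C m v = n)"

definition is_image :: "('o, 'a, 'z) category_scheme \<Rightarrow> 'a \<Rightarrow> 'a \<Rightarrow> 'a \<Rightarrow> bool" where
  "is_image C f m i \<longleftrightarrow> f \<in> Arr C \<and> mono C m \<and> Cod C m = Dom C f \<and> mono C i \<and>
     Cod C i = Cod C f \<and>
     (\<exists>e. regular_epi C e \<and> Dom C e = Dom C m \<and> Cod C e = Dom C i \<and>
          Cmp C i e = Cmp C f m)"

text \<open>Relations on X are given by a pair of arrows r1, r2 : R \<rightarrow> X (the two components of
  R \<rightarrow> X \<times> X). (a, b) \<in>_S \<theta>: the generalized elements a, b : S \<rightarrow> X jointly factor through \<theta>.\<close>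
definition cong_mod :: "('o, 'a, 'z) category_scheme \<Rightarrow> 'a \<Rightarrow> 'a \<Rightarrow> 'a \<times> 'a \<Rightarrow> bool" where
  "cong_mod C a b \<theta> \<longleftrightarrow>
     (\<exists>h. h \<in> hom C (Dom C a) (Dom C (fst \<theta>)) \<and> Cmp C (fst \<theta>) h = a \<and> Cmp C (snd \<theta>) h = b)"

definition effective_eq_rel :: "('o, 'a, 'z) category_scheme \<Rightarrow> 'o \<Rightarrow> 'a \<times> 'a \<Rightarrow> bool" where
  "effective_eq_rel C X \<theta> \<longleftrightarrow> (\<exists>f. f \<in> Arr C \<and> Dom C f = X \<and> kernel_pair C f (fst \<theta>) (snd \<theta>))"

definition approx_solvable :: "('o, 'a, 'z) category_scheme \<Rightarrow> 'o \<Rightarrow> 'o \<Rightarrow> (nat \<Rightarrow> 'a) \<Rightarrow> (nat \<Rightarrow> 'a \<times> 'a) \<Rightarrow> nat set \<Rightarrow> bool" where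
  "approx_solvable C X S a \<theta> I \<longleftrightarrow>
     (\<exists>\<alpha> x. regular_epi C \<alpha> \<and> Cod C \<alpha> = S \<and> x \<in> hom C (Dom C \<alpha>) X \<and>
        (\<forall>i \<in> I. cong_mod C x (Cmp C (a i) \<alpha>) (\<theta> i)))"

definition pairwise_CRT :: "('o, 'a, 'z) category_scheme \<Rightarrow> bool" where
  "pairwise_CRT C \<longleftrightarrow>
     (\<forall>X S m a \<theta>. X \<in> Obj C \<and> S \<in> Obj C \<and> 0 < m \<and>
        (\<forall>i < m. a i \<in> hom C S X \<and> effective_eq_rel C X (\<theta> i)) \<and>
        (\<forall>i < m. \<forall>j < m. approx_solvable C X S a \<theta> {i, j}) \<longrightarrow>
        approx_solvable C X S a \<theta> {..<m})"

definition finite_2fold_subobject_decompositions :: "('o, 'a, 'z) category_scheme \<Rightarrow> bool" where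
  "finite_2fold_subobject_decompositions C \<longleftrightarrow>
     (\<forall>n A P \<pi> s t. 0 < n \<and> nary_product C n A P \<pi> \<and>
        mono C s \<and> Cod C s = P \<and> mono C t \<and> Cod C t = P \<and>
        (\<forall>i < n. \<forall>j < n. \<forall>Q p q u. binary_product C (A i) (A j) Q p q \<and> u \<in> hom C P Q \<and>
            Cmp C p u = \<pi> i \<and> Cmp C q u = \<pi> j \<longrightarrow>
            (\<forall>ms mt. is_image C u s ms \<and> is_image C u t mt \<longrightarrow> same_subobject C ms mt)) \<longrightarrow>
        same_subobject C s t)"

end

theory Submission
  imports Defs
begin

lemma ex1_same: "\<exists>!x. P x \<Longrightarrow> P a \<Longrightarrow> P b \<Longrightarrow> a = b" by blast

locale regcat =
  fixes C :: "('o, 'a) category"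
  assumes reg: "regular_category C"
begin

abbreviation cp (infixr "\<cdot>" 75) where "g \<cdot> f \<equiv> Cmp C g f"

lemma cat: "is_category C" using reg unfolding regular_category_def by blast

lemma catD:
  "f \<in> Arr C \<Longrightarrow> Dom C f \<in> Obj C"
  "f \<in> Arr C \<Longrightarrow> Cod C f \<in> Obj C"
  "X \<in> Obj C \<Longrightarrow> Idt C X \<in> hom C X X"
  "f \<in> Arr C \<Longrightarrow> g \<in> Arr C \<Longrightarrow> Cod C f = Dom C g \<Longrightarrow> Cmp C g f \<in> hom C (Dom C f) (Cod C g)"
  "f \<in> Arr C \<Longrightarrow> Cmp C f (Idt C (Dom C f)) = f"
  "f \<in> Arr C \<Longrightarrow> Cmp C (Idt C (Cod C f)) f = f"
  "f \<in> Arr C \<Longrightarrow> g \<in> Arr C \<Longrightarrow> h \<in> Arr C \<Longrightarrow> Cod C f = Dom C g \<Longrightarrow> Cod C g = Dom C h \<Longrightarrow>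
         Cmp C h (Cmp C g f) = Cmp C (Cmp C h g) f"
  using cat unfolding is_category_def by blast+

lemma homD: "f \<in> hom C X Y \<Longrightarrow> f \<in> Arr C \<and> Dom C f = X \<and> Cod C f = Y"
  unfolding hom_def by blast

lemma homI: "f \<in> Arr C \<Longrightarrow> Dom C f = X \<Longrightarrow> Cod C f = Y \<Longrightarrow> f \<in> hom C X Y"
  unfolding hom_def by blast

lemma arr_hom: "f \<in> Arr C \<Longrightarrow> f \<in> hom C (Dom C f) (Cod C f)"
  unfolding hom_def by blast

lemma hom_obj: "f \<in> hom C X Y \<Longrightarrow> X \<in> Obj C \<and> Y \<in> Obj C"
  using catD(1,2) homD by blast

lemma comp_hom: "f \<in> hom C X Y \<Longrightarrow> g \<in> hom C Y Z \<Longrightarrow> g \<cdot> f \<in> hom C X Z"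
  using catD(4) homD by metis

lemma assoc: "f \<in> hom C A B \<Longrightarrow> g \<in> hom C B D \<Longrightarrow> h \<in> hom C D E \<Longrightarrow> h \<cdot> (g \<cdot> f) = (h \<cdot> g) \<cdot> f"
  using catD(7) homD by metis

lemma id_hom: "X \<in> Obj C \<Longrightarrow> Idt C X \<in> hom C X X"
  using catD(3) .

lemma comp_id: "f \<in> hom C X Y \<Longrightarrow> f \<cdot> Idt C X = f"
  using catD(5) homD by metis

lemma id_comp: "f \<in> hom C X Y \<Longrightarrow> Idt C Y \<cdot> f = f"
  using catD(6) homD by metis

lemma mono_cancel:
  assumes m: "mono C m" and g: "g \<in> hom C W (Dom C m)" and h: "h \<in> hom C W (Dom C m)" and e: "m \<cdot> g = m \<cdot> h"
  shows "g = h"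
proof -
  have M: "\<forall>g h. g \<in> Arr C \<and> h \<in> Arr C \<and> Cod C g = Dom C m \<and> Cod C h = Dom C m \<and>
            Dom C g = Dom C h \<and> Cmp C m g = Cmp C m h \<longrightarrow> g = h"
    using m unfolding mono_def by (elim conjE) assumption
  show ?thesis using M[rule_format, of g h] homD[OF g] homD[OF h] e by simp
qed

lemma mono_arr: "mono C m \<Longrightarrow> m \<in> hom C (Dom C m) (Cod C m)"
  unfolding mono_def using homI by simp

lemma coeqD:
  assumes "coequalizer C u v e"
  shows "u \<in> hom C (Dom C u) (Dom C e)" "v \<in> hom C (Dom C u) (Dom C e)" "e \<in> hom C (Dom C e) (Cod C e)"
    "e \<cdot> u = e \<cdot> v"
    "\<And>Y h. Y \<in> Obj C \<Longrightarrow> h \<in> hom C (Dom C e) Y \<Longrightarrow> h \<cdot> u = h \<cdot> v \<Longrightarrow>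
        (\<exists>!k. k \<in> hom C (Cod C e) Y \<and> k \<cdot> e = h)"
proof -
  have c: "u \<in> Arr C" "v \<in> Arr C" "e \<in> Arr C" "Dom C u = Dom C v" "Cod C u = Cod C v" "Dom C e = Cod C u"
    "e \<cdot> u = e \<cdot> v"
    "\<forall>Y h. Y \<in> Obj C \<and> h \<in> hom C (Dom C e) Y \<and> h \<cdot> u = h \<cdot> v \<longrightarrow>
        (\<exists>!k. k \<in> hom C (Cod C e) Y \<and> k \<cdot> e = h)"
    using assms unfolding coequalizer_def by simp_all
  show "u \<in> hom C (Dom C u) (Dom C e)" "v \<in> hom C (Dom C u) (Dom C e)" "e \<in> hom C (Dom C e) (Cod C e)"
    using c(1-6) by (simp_all add: homI)
  show "e \<cdot> u = e \<cdot> v" using c(7) .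
  show "\<And>Y h. Y \<in> Obj C \<Longrightarrow> h \<in> hom C (Dom C e) Y \<Longrightarrow> h \<cdot> u = h \<cdot> v \<Longrightarrow>
        (\<exists>!k. k \<in> hom C (Cod C e) Y \<and> k \<cdot> e = h)" using c(8) by blast
qed

lemma coeq_epi:
  assumes ce: "coequalizer C u v e" and g: "g \<in> hom C (Cod C e) Y" and h: "h \<in> hom C (Cod C e) Y"
    and eq: "g \<cdot> e = h \<cdot> e"
  shows "g = h"
proof -
  have u: "u \<in> hom C (Dom C u) (Dom C e)" and v: "v \<in> hom C (Dom C u) (Dom C e)"
    and e: "e \<in> hom C (Dom C e) (Cod C e)"
    using coeqD[OF ce] by blast+
  have Y: "Y \<in> Obj C" using hom_obj[OF g] by blast
  have H: "g \<cdot> e \<in> hom C (Dom C e) Y" using comp_hom[OF e g] .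
  have "(g \<cdot> e) \<cdot> u = g \<cdot> (e \<cdot> u)" using assoc[OF u e g] by simp
  also have "\<dots> = g \<cdot> (e \<cdot> v)" using coeqD(4)[OF ce] by simp
  also have "\<dots> = (g \<cdot> e) \<cdot> v" using assoc[OF v e g] by simp
  finally have Hc: "(g \<cdot> e) \<cdot> u = (g \<cdot> e) \<cdot> v" .
  have "\<exists>!k. k \<in> hom C (Cod C e) Y \<and> k \<cdot> e = g \<cdot> e"
    using coeqD(5)[OF ce Y H Hc] .
  then show ?thesis by (rule ex1_same) (use g h eq in simp_all)
qed

lemma repi_epi:
  "regular_epi C e \<Longrightarrow> g \<in> hom C (Cod C e) Y \<Longrightarrow> h \<in> hom C (Cod C e) Y \<Longrightarrow> g \<cdot> e = h \<cdot> e \<Longrightarrow> g = h"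
  unfolding regular_epi_def using coeq_epi by blast



lemma repi_hom: "regular_epi C e \<Longrightarrow> e \<in> hom C (Dom C e) (Cod C e)"
  unfolding regular_epi_def using coeqD(3) by blast

lemma ortho:
  assumes re: "regular_epi C e" and m: "mono C m" and x: "x \<in> hom C (Dom C e) (Dom C m)"
    and y: "y \<in> hom C (Cod C e) (Cod C m)" and sq: "m \<cdot> x = y \<cdot> e"
  shows "\<exists>d \<in> hom C (Cod C e) (Dom C m). m \<cdot> d = y \<and> d \<cdot> e = x"
proof -
  obtain u v where ce: "coequalizer C u v e" using re unfolding regular_epi_def by blast
  have u: "u \<in> hom C (Dom C u) (Dom C e)" and v: "v \<in> hom C (Dom C u) (Dom C e)"
    and e: "e \<in> hom C (Dom C e) (Cod C e)"
    using coeqD[OF ce] by blast+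
  have mh: "m \<in> hom C (Dom C m) (Cod C m)" using mono_arr[OF m] .
  have "m \<cdot> (x \<cdot> u) = (m \<cdot> x) \<cdot> u" using assoc[OF u x mh] .
  also have "\<dots> = (y \<cdot> e) \<cdot> u" using sq by simp
  also have "\<dots> = y \<cdot> (e \<cdot> u)" using assoc[OF u e y] by simp
  also have "\<dots> = y \<cdot> (e \<cdot> v)" using coeqD(4)[OF ce] by simp
  also have "\<dots> = (y \<cdot> e) \<cdot> v" using assoc[OF v e y] by simp
  also have "\<dots> = (m \<cdot> x) \<cdot> v" using sq by simp
  also have "\<dots> = m \<cdot> (x \<cdot> v)" using assoc[OF v x mh] by simp
  finally have "x \<cdot> u = x \<cdot> v"
    using mono_cancel[OF m comp_hom[OF u x] comp_hom[OF v x]] by blast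
  moreover have "Dom C m \<in> Obj C" using hom_obj[OF x] by blast
  ultimately obtain d where d: "d \<in> hom C (Cod C e) (Dom C m)" "d \<cdot> e = x"
    using coeqD(5)[OF ce _ x] by blast
  have "(m \<cdot> d) \<cdot> e = y \<cdot> e" using assoc[OF e d(1) mh] d sq by simp
  then have "m \<cdot> d = y" using repi_epi[OF re comp_hom[OF d(1) mh] y] by blast
  then show ?thesis using d by blast
qed

lemma id_repi: assumes X: "X \<in> Obj C" shows "regular_epi C (Idt C X)"
proof -
  have i: "Idt C X \<in> hom C X X" using id_hom[OF X] .
  note I = homD[OF i]
  have "coequalizer C (Idt C X) (Idt C X) (Idt C X)"
    unfolding coequalizer_def
  proof (intro conjI allI impI)
    fix Y h assume a: "Y \<in> Obj C \<and> h \<in> hom C (Dom C (Idt C X)) Y \<and> h \<cdot> Idt C X = h \<cdot> Idt C X"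
    then have h: "h \<in> hom C X Y" using I by simp
    show "\<exists>!k. k \<in> hom C (Cod C (Idt C X)) Y \<and> k \<cdot> Idt C X = h"
    proof (rule ex1I[of _ h])
      show "h \<in> hom C (Cod C (Idt C X)) Y \<and> h \<cdot> Idt C X = h" using h I comp_id[OF h] by simp
      fix k assume "k \<in> hom C (Cod C (Idt C X)) Y \<and> k \<cdot> Idt C X = h"
      then show "k = h" using I comp_id by metis
    qed
  qed (simp_all add: I)
  then show ?thesis unfolding regular_epi_def by blast
qed

lemma pbD:
  assumes "pullback C f g p q"
  shows "p \<in> hom C (Dom C p) (Dom C f)" "q \<in> hom C (Dom C p) (Dom C g)"
    "f \<in> hom C (Dom C f) (Cod C f)" "g \<in> hom C (Dom C g) (Cod C f)" "f \<cdot> p = g \<cdot> q"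
proof -
  have c: "f \<in> Arr C" "g \<in> Arr C" "p \<in> Arr C" "q \<in> Arr C"
     "Cod C f = Cod C g" "Dom C p = Dom C q" "Cod C p = Dom C f" "Cod C q = Dom C g"
     "f \<cdot> p = g \<cdot> q"
    using assms unfolding pullback_def by simp_all
  then show "p \<in> hom C (Dom C p) (Dom C f)" "q \<in> hom C (Dom C p) (Dom C g)"
    "f \<in> hom C (Dom C f) (Cod C f)" "g \<in> hom C (Dom C g) (Cod C f)" "f \<cdot> p = g \<cdot> q"
    by (simp_all add: homI)
qed

lemma pb_univ':
  assumes "pullback C f g p q"
  shows "\<forall>W x y. W \<in> Obj C \<and> x \<in> hom C W (Dom C f) \<and> y \<in> hom C W (Dom C g) \<and>
              Cmp C f x = Cmp C g y \<longrightarrow>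
        (\<exists>!u. u \<in> hom C W (Dom C p) \<and> Cmp C p u = x \<and> Cmp C q u = y)"
  using assms unfolding pullback_def by (elim conjE) assumption

lemma pb_univ:
  assumes "pullback C f g p q" "x \<in> hom C W (Dom C f)" "y \<in> hom C W (Dom C g)" "f \<cdot> x = g \<cdot> y"
  shows "\<exists>u \<in> hom C W (Dom C p). p \<cdot> u = x \<and> q \<cdot> u = y"
proof -
  have "W \<in> Obj C" using hom_obj[OF assms(2)] by blast
  then have "\<exists>!u. u \<in> hom C W (Dom C p) \<and> Cmp C p u = x \<and> Cmp C q u = y"
    using pb_univ'[OF assms(1)] assms(2-4) by blast
  then show ?thesis by blast
qed

lemma pb_exists: "f \<in> Arr C \<Longrightarrow> g \<in> Arr C \<Longrightarrow> Cod C f = Cod C g \<Longrightarrow> \<exists>p q. pullback C f g p q"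
  using reg unfolding regular_category_def has_finite_limits_def by blast

lemma pb_stable: "regular_epi C e \<Longrightarrow> pullback C e g p q \<Longrightarrow> regular_epi C q"
  using reg unfolding regular_category_def by blast

lemma kp_coeq: "pullback C f f p q \<Longrightarrow> \<exists>e. coequalizer C p q e"
  using reg unfolding regular_category_def kernel_pair_def by blast

end

context regcat begin

lemma factor:
  assumes f: "f \<in> Arr C"
  shows "\<exists>e m. regular_epi C e \<and> mono C m \<and> Dom C e = Dom C f \<and> Cod C e = Dom C m \<and>
               Cod C m = Cod C f \<and> m \<cdot> e = f"
proof -
  obtain p q where kp: "pullback C f f p q" using pb_exists[OF f f] by blast
  obtain e where ce: "coequalizer C p q e" using kp_coeq[OF kp] by blast
  have re: "regular_epi C e" using ce unfolding regular_epi_def by blast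
  note P = pbD[OF kp]
  have De: "Dom C e = Dom C f" using homD[OF coeqD(1)[OF ce]] homD[OF P(1)] by simp
  have eh: "e \<in> hom C (Dom C f) (Cod C e)" using repi_hom[OF re] De by simp
  have fh: "f \<in> hom C (Dom C e) (Cod C f)" using arr_hom[OF f] De by simp
  have B: "Cod C f \<in> Obj C" using hom_obj[OF fh] by blast
  have "f \<cdot> p = f \<cdot> q" using P by simp
  then have "\<exists>!m. m \<in> hom C (Cod C e) (Cod C f) \<and> m \<cdot> e = f"
    using coeqD(5)[OF ce B fh] by blast
  then obtain m where m: "m \<in> hom C (Cod C e) (Cod C f)" "m \<cdot> e = f" by blast
  have "mono C m" unfolding mono_def
  proof (intro conjI allI impI)
    show "m \<in> Arr C" using m homD by blast
    fix g h assume a: "g \<in> Arr C \<and> h \<in> Arr C \<and> Cod C g = Dom C m \<and> Cod C h = Dom C m \<and>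
            Dom C g = Dom C h \<and> m \<cdot> g = m \<cdot> h"
    define Z where "Z = Dom C g"
    have Dm: "Dom C m = Cod C e" using homD[OF m(1)] by simp
    have g: "g \<in> hom C Z (Cod C e)" using a Dm unfolding Z_def hom_def by auto
    have h: "h \<in> hom C Z (Cod C e)" using a Dm unfolding Z_def hom_def by auto
    obtain a1 b1 where pb1: "pullback C e g a1 b1" using pb_exists[OF homD[OF eh, THEN conjunct1] homD[OF g, THEN conjunct1]] homD[OF g] homD[OF eh] by auto
    note Q1 = pbD[OF pb1]
    have rb1: "regular_epi C b1" using pb_stable[OF re pb1] .
    have a1: "a1 \<in> hom C (Dom C a1) (Dom C f)" using Q1(1) De by simp
    have b1: "b1 \<in> hom C (Dom C a1) Z" using Q1(2) homD[OF g] by simp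
    have hb1: "h \<cdot> b1 \<in> hom C (Dom C a1) (Cod C e)" using comp_hom[OF b1 h] .
    obtain a2 b2 where pb2: "pullback C e (h \<cdot> b1) a2 b2"
      using pb_exists[OF homD[OF eh, THEN conjunct1] homD[OF hb1, THEN conjunct1]] homD[OF hb1] homD[OF eh] by auto
    note Q2 = pbD[OF pb2]
    have rb2: "regular_epi C b2" using pb_stable[OF re pb2] .
    have a2: "a2 \<in> hom C (Dom C a2) (Dom C f)" using Q2(1) De by simp
    have b2: "b2 \<in> hom C (Dom C a2) (Dom C a1)" using Q2(2) homD[OF hb1] by simp
    have a1b2: "a1 \<cdot> b2 \<in> hom C (Dom C a2) (Dom C f)" using comp_hom[OF b2 a1] .
    have e': "e \<in> hom C (Dom C f) (Dom C m)" using eh Dm by simp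
    have mh: "m \<in> hom C (Dom C m) (Cod C f)" using m Dm by simp
    have gbb: "g \<cdot> b1 \<cdot> b2 = (g \<cdot> b1) \<cdot> b2" using assoc[OF b2 b1 g] .
    have hbb: "h \<cdot> b1 \<cdot> b2 = (h \<cdot> b1) \<cdot> b2" using assoc[OF b2 b1 h] .
    have e1: "e \<cdot> a1 = g \<cdot> b1" using Q1(5) .
    have e2: "e \<cdot> a2 = (h \<cdot> b1) \<cdot> b2" using Q2(5) .
    have "f \<cdot> (a1 \<cdot> b2) = (m \<cdot> e) \<cdot> (a1 \<cdot> b2)" using m by simp
    also have "\<dots> = m \<cdot> (e \<cdot> (a1 \<cdot> b2))" using assoc[OF a1b2 e' mh] by simp
    also have "\<dots> = m \<cdot> ((e \<cdot> a1) \<cdot> b2)" using assoc[OF b2 a1 e'] by simp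
    also have "\<dots> = m \<cdot> (g \<cdot> (b1 \<cdot> b2))" using e1 gbb by simp
    also have "\<dots> = (m \<cdot> g) \<cdot> (b1 \<cdot> b2)" using assoc[OF comp_hom[OF b2 b1] g] m Dm by simp
    also have "\<dots> = (m \<cdot> h) \<cdot> (b1 \<cdot> b2)" using a by simp
    also have "\<dots> = m \<cdot> (h \<cdot> (b1 \<cdot> b2))" using assoc[OF comp_hom[OF b2 b1] h] m Dm by simp
    also have "\<dots> = m \<cdot> (e \<cdot> a2)" using e2 hbb by simp
    also have "\<dots> = (m \<cdot> e) \<cdot> a2" using assoc[OF a2 e' mh] by simp
    also have "\<dots> = f \<cdot> a2" using m by simp
    finally have "f \<cdot> (a1 \<cdot> b2) = f \<cdot> a2" .
    then obtain k where k: "k \<in> hom C (Dom C a2) (Dom C p)" "p \<cdot> k = a1 \<cdot> b2" "q \<cdot> k = a2"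
      using pb_univ[OF kp a1b2 a2] by blast
    have pD: "p \<in> hom C (Dom C p) (Dom C f)" "q \<in> hom C (Dom C p) (Dom C f)" using P by auto
    have epq: "e \<cdot> p = e \<cdot> q" using coeqD(4)[OF ce] .
    have "(g \<cdot> b1) \<cdot> b2 = (e \<cdot> a1) \<cdot> b2" using e1 by simp
    also have "\<dots> = e \<cdot> (p \<cdot> k)" using assoc[OF b2 a1 e'] k by simp
    also have "\<dots> = (e \<cdot> p) \<cdot> k" using assoc[OF k(1) pD(1) e'] by simp
    also have "\<dots> = (e \<cdot> q) \<cdot> k" using epq by simp
    also have "\<dots> = e \<cdot> a2" using assoc[OF k(1) pD(2) e'] k by simp
    finally have "(g \<cdot> b1) \<cdot> b2 = (h \<cdot> b1) \<cdot> b2" using e2 by simp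
    moreover have "Cod C b2 = Dom C a1" using b2 homD by blast
    ultimately have "g \<cdot> b1 = h \<cdot> b1"
      using repi_epi[OF rb2, of "g \<cdot> b1" "Cod C e" "h \<cdot> b1"] comp_hom[OF b1 g] hb1 by simp
    moreover have "Cod C b1 = Z" using b1 homD by blast
    ultimately show "g = h" using repi_epi[OF rb1, of g "Cod C e" h] g h by simp
  qed
  then show ?thesis using re m De homD[OF m(1)] by (intro exI[of _ e] exI[of _ m]) auto
qed

lemma iso_repi:
  assumes ce: "coequalizer C u v e" and m: "m \<in> hom C (Cod C e) Y" and d: "d \<in> hom C Y (Cod C e)"
    and md: "m \<cdot> d = Idt C Y" and dm: "d \<cdot> m = Idt C (Cod C e)"
  shows "coequalizer C u v (m \<cdot> e)"
proof -
  have u: "u \<in> hom C (Dom C u) (Dom C e)" and v: "v \<in> hom C (Dom C u) (Dom C e)"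
    and e: "e \<in> hom C (Dom C e) (Cod C e)"
    using coeqD[OF ce] by blast+
  have me: "m \<cdot> e \<in> hom C (Dom C e) Y" using comp_hom[OF e m] .
  note MD = homD[OF me]
  show ?thesis unfolding coequalizer_def
  proof (intro conjI allI impI)
    show "(m \<cdot> e) \<cdot> u = (m \<cdot> e) \<cdot> v" using assoc[OF u e m] assoc[OF v e m] coeqD(4)[OF ce]
      by simp
    fix Z h assume a: "Z \<in> Obj C \<and> h \<in> hom C (Dom C (m \<cdot> e)) Z \<and> h \<cdot> u = h \<cdot> v"
    have hh: "h \<in> hom C (Dom C e) Z" using a MD by simp
    have "\<exists>!k. k \<in> hom C (Cod C e) Z \<and> k \<cdot> e = h"
      using coeqD(5)[OF ce _ hh] a by blast
    then obtain k where k: "k \<in> hom C (Cod C e) Z" "k \<cdot> e = h" by blast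
    have kd: "k \<cdot> d \<in> hom C Y Z" using comp_hom[OF d k(1)] .
    have "(k \<cdot> d) \<cdot> (m \<cdot> e) = k \<cdot> (d \<cdot> (m \<cdot> e))" using assoc[OF me d k(1)] by simp
    also have "\<dots> = k \<cdot> ((d \<cdot> m) \<cdot> e)" using assoc[OF e m d] by simp
    also have "\<dots> = h" using dm id_comp[OF e] k by simp
    finally have ex: "(k \<cdot> d) \<cdot> (m \<cdot> e) = h" .
    show "\<exists>!k. k \<in> hom C (Cod C (m \<cdot> e)) Z \<and> k \<cdot> (m \<cdot> e) = h"
    proof (rule ex1I[of _ "k \<cdot> d"])
      show "k \<cdot> d \<in> hom C (Cod C (m \<cdot> e)) Z \<and> (k \<cdot> d) \<cdot> m \<cdot> e = h" using kd ex MD by simp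
      fix k' assume k': "k' \<in> hom C (Cod C (m \<cdot> e)) Z \<and> k' \<cdot> m \<cdot> e = h"
      have k'h: "k' \<in> hom C Y Z" using k' MD by simp
      have "(k' \<cdot> m) \<cdot> e = k \<cdot> e" using assoc[OF e m k'h] k' k by simp
      then have "k' \<cdot> m = k" using coeq_epi[OF ce comp_hom[OF m k'h] k(1)] by simp
      then have "(k' \<cdot> m) \<cdot> d = k \<cdot> d" by simp
      then show "k' = k \<cdot> d" using assoc[OF d m k'h] md comp_id[OF k'h] by simp
    qed
  qed (use homD[OF u] homD[OF v] homD[OF e] MD in simp_all)
qed

lemma repi_comp:
  assumes f: "regular_epi C f" and g: "regular_epi C g" and fg: "Cod C f = Dom C g"
  shows "regular_epi C (g \<cdot> f)"
proof -
  have fh: "f \<in> hom C (Dom C f) (Dom C g)" using repi_hom[OF f] fg by simp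
  have gh: "g \<in> hom C (Dom C g) (Cod C g)" using repi_hom[OF g] .
  have gf: "g \<cdot> f \<in> hom C (Dom C f) (Cod C g)" using comp_hom[OF fh gh] .
  obtain e m where em: "regular_epi C e" "mono C m" "Dom C e = Dom C f" "Cod C e = Dom C m"
     "Cod C m = Cod C g" "m \<cdot> e = g \<cdot> f"
    using factor[OF homD[OF gf, THEN conjunct1]] homD[OF gf] by auto
  have eh: "e \<in> hom C (Dom C f) (Dom C m)" using repi_hom[OF em(1)] em by simp
  have mh: "m \<in> hom C (Dom C m) (Cod C g)" using mono_arr[OF em(2)] em by simp
  obtain d where d: "d \<in> hom C (Dom C g) (Dom C m)" "m \<cdot> d = g" "d \<cdot> f = e"
    using ortho[OF f em(2), of e g] eh gh em fg by auto
  have Y: "Cod C g \<in> Obj C" using hom_obj[OF gh] by blast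
  have idh: "Idt C (Cod C g) \<in> hom C (Cod C g) (Cod C m)" using id_hom[OF Y] em by simp
  obtain d2 where d2: "d2 \<in> hom C (Cod C g) (Dom C m)" "m \<cdot> d2 = Idt C (Cod C g)"
    using ortho[OF g em(2) _ idh] d id_comp[OF gh] by auto
  have dmh: "d2 \<cdot> m \<in> hom C (Dom C m) (Dom C m)" using comp_hom[OF mh d2(1)] .
  have Dm: "Dom C m \<in> Obj C" using hom_obj[OF mh] by blast
  have "m \<cdot> (d2 \<cdot> m) = m \<cdot> Idt C (Dom C m)"
    using assoc[OF mh d2(1) mh] d2 id_comp[OF mh] comp_id[OF mh] by simp
  then have dm: "d2 \<cdot> m = Idt C (Dom C m)" using mono_cancel[OF em(2) dmh id_hom[OF Dm]] by simp
  obtain u v where ce: "coequalizer C u v e" using em(1) unfolding regular_epi_def by blast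
  have "coequalizer C u v (m \<cdot> e)"
    using iso_repi[OF ce _ _ d2(2)] mh d2(1) dm em(4) by simp
  then show ?thesis using em(6) unfolding regular_epi_def by metis
qed

end

context regcat begin

lemma comp_arr: "f \<in> Arr C \<Longrightarrow> g \<in> Arr C \<Longrightarrow> Cod C f = Dom C g \<Longrightarrow> g \<cdot> f \<in> Arr C"
  by (metis arr_hom comp_hom homD homI)
lemma dom_comp: "f \<in> Arr C \<Longrightarrow> g \<in> Arr C \<Longrightarrow> Cod C f = Dom C g \<Longrightarrow> Dom C (g \<cdot> f) = Dom C f"
  by (metis arr_hom comp_hom homD homI)
lemma cod_comp: "f \<in> Arr C \<Longrightarrow> g \<in> Arr C \<Longrightarrow> Cod C f = Dom C g \<Longrightarrow> Cod C (g \<cdot> f) = Cod C g"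
  by (metis arr_hom comp_hom homD homI)
lemma assocR: "f \<in> Arr C \<Longrightarrow> g \<in> Arr C \<Longrightarrow> h \<in> Arr C \<Longrightarrow> Cod C f = Dom C g \<Longrightarrow> Cod C g = Dom C h
   \<Longrightarrow> (h \<cdot> g) \<cdot> f = h \<cdot> (g \<cdot> f)"
proof -
  assume a: "f \<in> Arr C" "g \<in> Arr C" "h \<in> Arr C" "Cod C f = Dom C g" "Cod C g = Dom C h"
  have "f \<in> hom C (Dom C f) (Cod C f)" "g \<in> hom C (Cod C f) (Cod C g)" "h \<in> hom C (Cod C g) (Cod C h)"
    using a by (auto simp: hom_def)
  then show ?thesis using assoc by (metis (no_types))
qed
lemmas cs = comp_arr dom_comp cod_comp assocR

lemma bin_prod_exists:
  assumes A: "A \<in> Obj C" and B: "B \<in> Obj C"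
  shows "\<exists>Q p q. binary_product C A B Q p q"
proof -
  obtain T where T: "T \<in> Obj C" "\<forall>X \<in> Obj C. \<exists>!f. f \<in> hom C X T"
  proof -
    have "has_terminal C" using reg unfolding regular_category_def has_finite_limits_def by blast
    then show ?thesis using that unfolding has_terminal_def by blast
  qed
  obtain tA where tA: "tA \<in> hom C A T" using T A by blast
  obtain tB where tB: "tB \<in> hom C B T" using T B by blast
  obtain p q where pb: "pullback C tA tB p q"
    using pb_exists[of tA tB] homD[OF tA] homD[OF tB] by auto
  note P = pbD[OF pb]
  have ph: "p \<in> hom C (Dom C p) A" and qh: "q \<in> hom C (Dom C p) B"
    using P homD[OF tA] homD[OF tB] by auto
  have "binary_product C A B (Dom C p) p q" unfolding binary_product_def
  proof (intro conjI allI impI)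
    show "Dom C p \<in> Obj C" using hom_obj[OF ph] by blast
    fix W x y assume a: "W \<in> Obj C \<and> x \<in> hom C W A \<and> y \<in> hom C W B"
    have "tA \<cdot> x \<in> hom C W T" "tB \<cdot> y \<in> hom C W T" using a comp_hom tA tB by blast+
    moreover have "\<exists>!f. f \<in> hom C W T" using T(2) a by blast
    ultimately have eq: "tA \<cdot> x = tB \<cdot> y" by blast
    show "\<exists>!u. u \<in> hom C W (Dom C p) \<and> p \<cdot> u = x \<and> q \<cdot> u = y"
    proof -
      have "x \<in> hom C W (Dom C tA)" "y \<in> hom C W (Dom C tB)" using a homD[OF tA] homD[OF tB] by auto
      moreover have "\<forall>W x y. W \<in> Obj C \<and> x \<in> hom C W (Dom C tA) \<and> y \<in> hom C W (Dom C tB) \<and>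
              tA \<cdot> x = tB \<cdot> y \<longrightarrow>
        (\<exists>!u. u \<in> hom C W (Dom C p) \<and> p \<cdot> u = x \<and> q \<cdot> u = y)" using pb unfolding pullback_def by (elim conjE)
      ultimately have "\<exists>!u. u \<in> hom C W (Dom C p) \<and> p \<cdot> u = x \<and> q \<cdot> u = y"
        using a eq by blast
      then show ?thesis .
    qed
  qed (use A B ph qh in blast)+
  then show ?thesis by blast
qed

lemma comp_cancel_r:
  assumes "x \<in> Arr C" "y \<in> Arr C" "z \<in> Arr C" "Cod C z = Dom C x" "Dom C x = Dom C y" "x = y"
  shows "x \<cdot> z = y \<cdot> z" using assms by simp

end

locale subsetting = regcat +
  fixes n :: nat and A and P and \<pi> and s t
  assumes np: "nary_product C n A P \<pi>"
    and ms: "mono C s" and cs_: "Cod C s = P" and mt: "mono C t" and ct: "Cod C t = P"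
    and H: "\<forall>i < n. \<forall>j < n. \<forall>Q p q u. binary_product C (A i) (A j) Q p q \<and> u \<in> hom C P Q \<and>
            Cmp C p u = \<pi> i \<and> Cmp C q u = \<pi> j \<longrightarrow>
            (\<forall>ms mt. is_image C u s ms \<and> is_image C u t mt \<longrightarrow> same_subobject C ms mt)"
    and crt: "pairwise_CRT C" and npos: "0 < n"
begin

lemma sh: "s \<in> hom C (Dom C s) P" using mono_arr[OF ms] cs_ by simp
lemma th: "t \<in> hom C (Dom C t) P" using mono_arr[OF mt] ct by simp
lemma pih: "i < n \<Longrightarrow> \<pi> i \<in> hom C P (A i)" using np unfolding nary_product_def by blast
lemma Aobj: "i < n \<Longrightarrow> A i \<in> Obj C" using np unfolding nary_product_def by blast

lemma pair_cover:
  assumes i: "i < n" and j: "j < n" and g: "g \<in> hom C Z (Dom C s)"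
  shows "\<exists>\<beta> y. regular_epi C \<beta> \<and> Cod C \<beta> = Z \<and> y \<in> hom C (Dom C \<beta>) (Dom C t) \<and>
     \<pi> i \<cdot> t \<cdot> y = \<pi> i \<cdot> s \<cdot> g \<cdot> \<beta> \<and> \<pi> j \<cdot> t \<cdot> y = \<pi> j \<cdot> s \<cdot> g \<cdot> \<beta>"
proof -
  obtain Q p q where bp: "binary_product C (A i) (A j) Q p q"
    using bin_prod_exists[OF Aobj[OF i] Aobj[OF j]] by blast
  have P: "P \<in> Obj C" using hom_obj[OF sh] by blast
  obtain u where u: "u \<in> hom C P Q" "p \<cdot> u = \<pi> i" "q \<cdot> u = \<pi> j"
    using bp P pih[OF i] pih[OF j] unfolding binary_product_def by blast
  have ph: "p \<in> hom C Q (A i)" and qh: "q \<in> hom C Q (A j)" using bp unfolding binary_product_def by auto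
  have us: "u \<cdot> s \<in> hom C (Dom C s) Q" using comp_hom[OF sh u(1)] .
  have ut: "u \<cdot> t \<in> hom C (Dom C t) Q" using comp_hom[OF th u(1)] .
  obtain es m1 where f1: "regular_epi C es" "mono C m1" "Dom C es = Dom C s" "Cod C es = Dom C m1"
     "Cod C m1 = Q" "m1 \<cdot> es = u \<cdot> s"
    using factor[OF homD[OF us, THEN conjunct1]] homD[OF us] by auto
  obtain et m2 where f2: "regular_epi C et" "mono C m2" "Dom C et = Dom C t" "Cod C et = Dom C m2"
     "Cod C m2 = Q" "m2 \<cdot> et = u \<cdot> t"
    using factor[OF homD[OF ut, THEN conjunct1]] homD[OF ut] by auto
  have "is_image C u s m1" unfolding is_image_def
    using f1 homD[OF u(1)] ms cs_ by (intro conjI exI[of _ es]) auto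
  moreover have "is_image C u t m2" unfolding is_image_def
    using f2 homD[OF u(1)] mt ct by (intro conjI exI[of _ et]) auto
  ultimately have "same_subobject C m1 m2" using H i j bp u by blast
  then obtain w where w: "w \<in> hom C (Dom C m1) (Dom C m2)" "m2 \<cdot> w = m1"
    unfolding same_subobject_def by blast
  have esh: "es \<in> hom C (Dom C s) (Dom C m1)" using repi_hom[OF f1(1)] f1 by simp
  have eth: "et \<in> hom C (Dom C t) (Dom C m2)" using repi_hom[OF f2(1)] f2 by simp
  have m1h: "m1 \<in> hom C (Dom C m1) Q" using mono_arr[OF f1(2)] f1 by simp
  have m2h: "m2 \<in> hom C (Dom C m2) Q" using mono_arr[OF f2(2)] f2 by simp
  have phi: "w \<cdot> es \<cdot> g \<in> hom C Z (Dom C m2)" using comp_hom[OF comp_hom[OF g esh] w(1)] .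
  obtain a b where pb: "pullback C et (w \<cdot> es \<cdot> g) a b"
    using pb_exists[of et "w \<cdot> es \<cdot> g"] homD[OF phi] homD[OF eth] by auto
  note PB = pbD[OF pb]
  have rb: "regular_epi C b" using pb_stable[OF f2(1) pb] .
  have bh: "b \<in> hom C (Dom C a) Z" using PB(2) homD[OF phi] by simp
  have ah: "a \<in> hom C (Dom C a) (Dom C t)" using PB(1) homD[OF eth] by simp
  have Db: "Dom C b = Dom C a" using homD[OF bh] by simp
  note D = homD[OF sh] homD[OF th] homD[OF u(1)] homD[OF g] homD[OF esh] homD[OF eth] homD[OF m1h] homD[OF m2h]
    homD[OF w(1)] homD[OF bh] homD[OF ah] homD[OF ph] homD[OF qh]
  have "(u \<cdot> t) \<cdot> a = (m2 \<cdot> et) \<cdot> a" using f2 by simp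
  also have "\<dots> = m2 \<cdot> (et \<cdot> a)" using D by (simp add: cs)
  also have "\<dots> = m2 \<cdot> ((w \<cdot> es \<cdot> g) \<cdot> b)" using PB(5) by simp
  also have "\<dots> = (m2 \<cdot> w) \<cdot> (es \<cdot> g \<cdot> b)" using D by (simp add: cs)
  also have "\<dots> = (m1 \<cdot> es) \<cdot> (g \<cdot> b)" using w D by (simp add: cs)
  also have "\<dots> = (u \<cdot> s) \<cdot> (g \<cdot> b)" using f1 by simp
  finally have key: "(u \<cdot> t) \<cdot> a = (u \<cdot> s) \<cdot> (g \<cdot> b)" .
  have "p \<cdot> ((u \<cdot> t) \<cdot> a) = p \<cdot> ((u \<cdot> s) \<cdot> (g \<cdot> b))" using key by simp
  moreover have "p \<cdot> ((u \<cdot> t) \<cdot> a) = (p \<cdot> u) \<cdot> t \<cdot> a" using D by (simp add: cs)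
  moreover have "p \<cdot> ((u \<cdot> s) \<cdot> (g \<cdot> b)) = (p \<cdot> u) \<cdot> s \<cdot> g \<cdot> b" using D by (simp add: cs)
  ultimately have e1: "\<pi> i \<cdot> t \<cdot> a = \<pi> i \<cdot> s \<cdot> g \<cdot> b" using u(2) by simp
  have "q \<cdot> ((u \<cdot> t) \<cdot> a) = q \<cdot> ((u \<cdot> s) \<cdot> (g \<cdot> b))" using key by simp
  moreover have "q \<cdot> ((u \<cdot> t) \<cdot> a) = (q \<cdot> u) \<cdot> t \<cdot> a" using D by (simp add: cs)
  moreover have "q \<cdot> ((u \<cdot> s) \<cdot> (g \<cdot> b)) = (q \<cdot> u) \<cdot> s \<cdot> g \<cdot> b" using D by (simp add: cs)
  ultimately have e2: "\<pi> j \<cdot> t \<cdot> a = \<pi> j \<cdot> s \<cdot> g \<cdot> b" using u(3) by simp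
  show ?thesis using rb ah e1 e2 Db homD[OF bh] by (intro exI[of _ b] exI[of _ a]) auto
qed

end

context subsetting begin

lemma build:
  "k \<le> n \<Longrightarrow> \<exists>\<alpha> a. regular_epi C \<alpha> \<and> Cod C \<alpha> = Dom C s \<and>
     (\<forall>i<k. a i \<in> hom C (Dom C \<alpha>) (Dom C t) \<and> \<pi> i \<cdot> t \<cdot> a i = \<pi> i \<cdot> s \<cdot> \<alpha>)"
proof (induction k)
  case 0
  have S: "Dom C s \<in> Obj C" using hom_obj[OF sh] by blast
  show ?case using id_repi[OF S] homD[OF id_hom[OF S]] by (intro exI[of _ "Idt C (Dom C s)"]) simp
next
  case (Suc k)
  then obtain \<alpha> a where IH: "regular_epi C \<alpha>" "Cod C \<alpha> = Dom C s"
     "\<forall>i<k. a i \<in> hom C (Dom C \<alpha>) (Dom C t) \<and> \<pi> i \<cdot> t \<cdot> a i = \<pi> i \<cdot> s \<cdot> \<alpha>" by auto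
  have k: "k < n" using Suc by simp
  have ah: "\<alpha> \<in> hom C (Dom C \<alpha>) (Dom C s)" using repi_hom[OF IH(1)] IH(2) by simp
  obtain \<beta> y where B: "regular_epi C \<beta>" "Cod C \<beta> = Dom C \<alpha>" "y \<in> hom C (Dom C \<beta>) (Dom C t)"
     "\<pi> k \<cdot> t \<cdot> y = \<pi> k \<cdot> s \<cdot> \<alpha> \<cdot> \<beta>"
    using pair_cover[OF k k ah] by blast
  have bh: "\<beta> \<in> hom C (Dom C \<beta>) (Dom C \<alpha>)" using repi_hom[OF B(1)] B(2) by simp
  have ab: "\<alpha> \<cdot> \<beta> \<in> hom C (Dom C \<beta>) (Dom C s)" using comp_hom[OF bh ah] .
  have rab: "regular_epi C (\<alpha> \<cdot> \<beta>)" using repi_comp[OF B(1) IH(1) B(2)] .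
  define a' where "a' = (\<lambda>i. if i < k then a i \<cdot> \<beta> else y)"
  have "\<forall>i<Suc k. a' i \<in> hom C (Dom C (\<alpha> \<cdot> \<beta>)) (Dom C t) \<and> \<pi> i \<cdot> t \<cdot> a' i = \<pi> i \<cdot> s \<cdot> (\<alpha> \<cdot> \<beta>)"
  proof (intro allI impI)
    fix i assume i: "i < Suc k"
    have Dab: "Dom C (\<alpha> \<cdot> \<beta>) = Dom C \<beta>" using homD[OF ab] by simp
    show "a' i \<in> hom C (Dom C (\<alpha> \<cdot> \<beta>)) (Dom C t) \<and> \<pi> i \<cdot> t \<cdot> a' i = \<pi> i \<cdot> s \<cdot> (\<alpha> \<cdot> \<beta>)"
    proof (cases "i < k")
      case True
      have ai: "a i \<in> hom C (Dom C \<alpha>) (Dom C t)" and E: "\<pi> i \<cdot> t \<cdot> a i = \<pi> i \<cdot> s \<cdot> \<alpha>" using IH(3) True by auto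
      have pi: "\<pi> i \<in> hom C P (A i)" using pih True k by simp
      have "(\<pi> i \<cdot> t \<cdot> a i) \<cdot> \<beta> = (\<pi> i \<cdot> s \<cdot> \<alpha>) \<cdot> \<beta>" using E by simp
      then have "\<pi> i \<cdot> t \<cdot> (a i \<cdot> \<beta>) = \<pi> i \<cdot> s \<cdot> (\<alpha> \<cdot> \<beta>)"
        using homD[OF ai] homD[OF bh] homD[OF ah] homD[OF sh] homD[OF th] homD[OF pi] by (simp add: cs)
      then show ?thesis using True a'_def comp_hom[OF bh ai] Dab by simp
    next
      case False
      then have "i = k" using i by simp
      then show ?thesis using False a'_def B(3,4) Dab by simp
    qed
  qed
  then show ?case using rab homD[OF ab] by (intro exI[of _ "\<alpha> \<cdot> \<beta>"] exI[of _ a']) simp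
qed

definition \<theta> where "\<theta> i = (SOME pq. pullback C (\<pi> i \<cdot> t) (\<pi> i \<cdot> t) (fst pq) (snd pq))"

lemma pit: "i < n \<Longrightarrow> \<pi> i \<cdot> t \<in> hom C (Dom C t) (A i)"
  using comp_hom[OF th pih] by blast

lemma theta_pb: assumes i: "i < n" shows "pullback C (\<pi> i \<cdot> t) (\<pi> i \<cdot> t) (fst (\<theta> i)) (snd (\<theta> i))"
proof -
  obtain p q where "pullback C (\<pi> i \<cdot> t) (\<pi> i \<cdot> t) p q"
    using pb_exists[of "\<pi> i \<cdot> t" "\<pi> i \<cdot> t"] homD[OF pit[OF i]] by blast
  then have "\<exists>pq. pullback C (\<pi> i \<cdot> t) (\<pi> i \<cdot> t) (fst pq) (snd pq)" by (intro exI[of _ "(p, q)"]) simp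
  then show ?thesis unfolding \<theta>_def by (rule someI_ex)
qed

lemma theta_eff: "i < n \<Longrightarrow> effective_eq_rel C (Dom C t) (\<theta> i)"
  unfolding effective_eq_rel_def kernel_pair_def using theta_pb homD[OF pit] by blast

lemma cong_of_eq:
  assumes i: "i < n" and y: "y \<in> hom C W (Dom C t)" and z: "z \<in> hom C W (Dom C t)"
    and e: "(\<pi> i \<cdot> t) \<cdot> y = (\<pi> i \<cdot> t) \<cdot> z"
  shows "cong_mod C y z (\<theta> i)"
proof -
  have D: "Dom C (\<pi> i \<cdot> t) = Dom C t" using homD[OF pit[OF i]] by simp
  obtain h where "h \<in> hom C W (Dom C (fst (\<theta> i)))" "fst (\<theta> i) \<cdot> h = y" "snd (\<theta> i) \<cdot> h = z"
    using pb_univ[OF theta_pb[OF i], of y W z] y z e D by auto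
  then show ?thesis unfolding cong_mod_def using homD[OF y] by blast
qed

lemma eq_of_cong:
  assumes i: "i < n" and c: "cong_mod C y z (\<theta> i)"
  shows "(\<pi> i \<cdot> t) \<cdot> y = (\<pi> i \<cdot> t) \<cdot> z"
proof -
  note PB = pbD[OF theta_pb[OF i]]
  obtain h where h: "h \<in> hom C (Dom C y) (Dom C (fst (\<theta> i)))" "fst (\<theta> i) \<cdot> h = y" "snd (\<theta> i) \<cdot> h = z"
    using c unfolding cong_mod_def by blast
  have "(\<pi> i \<cdot> t) \<cdot> y = ((\<pi> i \<cdot> t) \<cdot> fst (\<theta> i)) \<cdot> h" using assoc[OF h(1) PB(1) PB(3)] h by simp
  also have "\<dots> = ((\<pi> i \<cdot> t) \<cdot> snd (\<theta> i)) \<cdot> h" using PB(5) by simp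
  also have "\<dots> = (\<pi> i \<cdot> t) \<cdot> z" using assoc[OF h(1) PB(2) PB(4)] h by simp
  finally show ?thesis .
qed

lemma nary_uniq:
  assumes u1: "u1 \<in> hom C W P" and u2: "u2 \<in> hom C W P" and e: "\<forall>i<n. \<pi> i \<cdot> u1 = \<pi> i \<cdot> u2"
  shows "u1 = u2"
proof -
  have U: "\<forall>W f. W \<in> Obj C \<and> (\<forall>i < n. f i \<in> hom C W (A i)) \<longrightarrow>
        (\<exists>!u. u \<in> hom C W P \<and> (\<forall>i < n. \<pi> i \<cdot> u = f i))"
    using np unfolding nary_product_def by (elim conjE) assumption
  have W: "W \<in> Obj C" using hom_obj[OF u1] by blast
  have "\<forall>i < n. \<pi> i \<cdot> u1 \<in> hom C W (A i)" using comp_hom[OF u1 pih] by blast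
  then have "W \<in> Obj C \<and> (\<forall>i < n. (\<lambda>i. \<pi> i \<cdot> u1) i \<in> hom C W (A i))" using W by simp
  from mp[OF U[THEN spec[of _ W], THEN spec[of _ "\<lambda>i. \<pi> i \<cdot> u1"]] this]
  have "\<exists>!u. u \<in> hom C W P \<and> (\<forall>i < n. \<pi> i \<cdot> u = \<pi> i \<cdot> u1)" .
  then show ?thesis by (rule ex1_same) (use u1 u2 e in simp_all)
qed

lemma le_sub: "\<exists>k \<in> hom C (Dom C s) (Dom C t). t \<cdot> k = s"
proof -
  obtain \<alpha> a where BA: "regular_epi C \<alpha>" "Cod C \<alpha> = Dom C s"
     "\<forall>i<n. a i \<in> hom C (Dom C \<alpha>) (Dom C t) \<and> \<pi> i \<cdot> t \<cdot> a i = \<pi> i \<cdot> s \<cdot> \<alpha>"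
    using build[of n] by auto
  have ah: "\<alpha> \<in> hom C (Dom C \<alpha>) (Dom C s)" using repi_hom[OF BA(1)] BA(2) by simp
  have X: "Dom C t \<in> Obj C" using hom_obj[OF th] by blast
  have S0: "Dom C \<alpha> \<in> Obj C" using hom_obj[OF ah] by blast
  have pw: "\<forall>i<n. \<forall>j<n. approx_solvable C (Dom C t) (Dom C \<alpha>) a \<theta> {i, j}"
  proof (intro allI impI)
    fix i j assume i: "i < n" and j: "j < n"
    obtain \<beta> y where B: "regular_epi C \<beta>" "Cod C \<beta> = Dom C \<alpha>" "y \<in> hom C (Dom C \<beta>) (Dom C t)"
     "\<pi> i \<cdot> t \<cdot> y = \<pi> i \<cdot> s \<cdot> \<alpha> \<cdot> \<beta>" "\<pi> j \<cdot> t \<cdot> y = \<pi> j \<cdot> s \<cdot> \<alpha> \<cdot> \<beta>"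
      using pair_cover[OF i j ah] by blast
    have bh: "\<beta> \<in> hom C (Dom C \<beta>) (Dom C \<alpha>)" using repi_hom[OF B(1)] B(2) by simp
    have "cong_mod C y (a l \<cdot> \<beta>) (\<theta> l)" if l: "l \<in> {i, j}" for l
    proof -
      have ln: "l < n" using l i j by auto
      have E1: "\<pi> l \<cdot> t \<cdot> y = \<pi> l \<cdot> s \<cdot> \<alpha> \<cdot> \<beta>" using l B by auto
      have al: "a l \<in> hom C (Dom C \<alpha>) (Dom C t)" and E: "\<pi> l \<cdot> t \<cdot> a l = \<pi> l \<cdot> s \<cdot> \<alpha>" using BA(3) ln by auto
      have pl: "\<pi> l \<in> hom C P (A l)" using pih ln by simp
      have alb: "a l \<cdot> \<beta> \<in> hom C (Dom C \<beta>) (Dom C t)" using comp_hom[OF bh al] .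
      have "(\<pi> l \<cdot> t \<cdot> a l) \<cdot> \<beta> = (\<pi> l \<cdot> s \<cdot> \<alpha>) \<cdot> \<beta>" using E by simp
      then have "(\<pi> l \<cdot> t) \<cdot> (a l \<cdot> \<beta>) = \<pi> l \<cdot> s \<cdot> \<alpha> \<cdot> \<beta>"
        using homD[OF al] homD[OF bh] homD[OF ah] homD[OF sh] homD[OF th] homD[OF pl] by (simp add: cs)
      moreover have "(\<pi> l \<cdot> t) \<cdot> y = \<pi> l \<cdot> t \<cdot> y"
        using homD[OF B(3)] homD[OF th] homD[OF pl] by (simp add: cs)
      ultimately have "(\<pi> l \<cdot> t) \<cdot> y = (\<pi> l \<cdot> t) \<cdot> (a l \<cdot> \<beta>)" using E1 by simp
      then show ?thesis using cong_of_eq[OF ln B(3) alb] by simp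
    qed
    then show "approx_solvable C (Dom C t) (Dom C \<alpha>) a \<theta> {i, j}"
      unfolding approx_solvable_def using B(1,2,3) by blast
  qed
  have pre: "Dom C t \<in> Obj C \<and> Dom C \<alpha> \<in> Obj C \<and> 0 < n \<and>
        (\<forall>i < n. a i \<in> hom C (Dom C \<alpha>) (Dom C t) \<and> effective_eq_rel C (Dom C t) (\<theta> i)) \<and>
        (\<forall>i < n. \<forall>j < n. approx_solvable C (Dom C t) (Dom C \<alpha>) a \<theta> {i, j})"
    using X S0 npos BA(3) theta_eff pw by blast
  have "approx_solvable C (Dom C t) (Dom C \<alpha>) a \<theta> {..<n}"
    using crt[unfolded pairwise_CRT_def, rule_format, OF pre] .
  then obtain \<gamma> x where G: "regular_epi C \<gamma>" "Cod C \<gamma> = Dom C \<alpha>" "x \<in> hom C (Dom C \<gamma>) (Dom C t)"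
     "\<forall>i \<in> {..<n}. cong_mod C x (a i \<cdot> \<gamma>) (\<theta> i)"
    unfolding approx_solvable_def by blast
  have gh: "\<gamma> \<in> hom C (Dom C \<gamma>) (Dom C \<alpha>)" using repi_hom[OF G(1)] G(2) by simp
  have agh: "\<alpha> \<cdot> \<gamma> \<in> hom C (Dom C \<gamma>) (Dom C s)" using comp_hom[OF gh ah] .
  have txh: "t \<cdot> x \<in> hom C (Dom C \<gamma>) P" using comp_hom[OF G(3) th] .
  have sah: "s \<cdot> \<alpha> \<cdot> \<gamma> \<in> hom C (Dom C \<gamma>) P" using comp_hom[OF agh sh] .
  have "\<forall>i<n. \<pi> i \<cdot> (t \<cdot> x) = \<pi> i \<cdot> (s \<cdot> \<alpha> \<cdot> \<gamma>)"
  proof (intro allI impI)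
    fix i assume i: "i < n"
    have al: "a i \<in> hom C (Dom C \<alpha>) (Dom C t)" and E: "\<pi> i \<cdot> t \<cdot> a i = \<pi> i \<cdot> s \<cdot> \<alpha>" using BA(3) i by auto
    have pl: "\<pi> i \<in> hom C P (A i)" using pih i by simp
    note HD = homD[OF G(3)] homD[OF gh] homD[OF ah] homD[OF sh] homD[OF th] homD[OF al] homD[OF pl]
    have "(\<pi> i \<cdot> t) \<cdot> x = (\<pi> i \<cdot> t) \<cdot> (a i \<cdot> \<gamma>)" using eq_of_cong[OF i] G(4) i by simp
    moreover have "(\<pi> i \<cdot> t \<cdot> a i) \<cdot> \<gamma> = (\<pi> i \<cdot> s \<cdot> \<alpha>) \<cdot> \<gamma>" using E by simp
    ultimately show "\<pi> i \<cdot> (t \<cdot> x) = \<pi> i \<cdot> (s \<cdot> \<alpha> \<cdot> \<gamma>)"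
      using HD by (simp add: cs)
  qed
  then have tx: "t \<cdot> x = s \<cdot> (\<alpha> \<cdot> \<gamma>)" using nary_uniq[OF txh sah] by simp
  have rag: "regular_epi C (\<alpha> \<cdot> \<gamma>)" using repi_comp[OF G(1) BA(1) G(2)] .
  have DC: "Dom C (\<alpha> \<cdot> \<gamma>) = Dom C \<gamma>" "Cod C (\<alpha> \<cdot> \<gamma>) = Dom C s" using homD[OF agh] by auto
  have s2: "s \<in> hom C (Cod C (\<alpha> \<cdot> \<gamma>)) (Cod C t)" using sh DC ct by simp
  obtain d where "d \<in> hom C (Cod C (\<alpha> \<cdot> \<gamma>)) (Dom C t)" "t \<cdot> d = s"
    using ortho[OF rag mt _ s2 tx] G(3) DC by auto
  then show ?thesis using DC by auto
qed

end

lemma same_sym: "same_subobject C m1 m2 \<Longrightarrow> same_subobject C m2 m1"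
  unfolding same_subobject_def by (elim conjE) (intro conjI; (assumption | simp))

theorem lemma5p5:
  fixes C :: "('o, 'a) category"
  assumes "regular_category C"
    and "pairwise_CRT C"
  shows "finite_2fold_subobject_decompositions C"
  unfolding finite_2fold_subobject_decompositions_def
proof (intro allI impI, elim conjE)
  fix n A P \<pi> s t
  assume npos: "0 < n" and np: "nary_product C n A P \<pi>" and ms: "mono C s" and cs: "Cod C s = P"
    and mt: "mono C t" and ct: "Cod C t = P"
    and H: "\<forall>i < n. \<forall>j < n. \<forall>Q p q u. binary_product C (A i) (A j) Q p q \<and> u \<in> hom C P Q \<and>
            Cmp C p u = \<pi> i \<and> Cmp C q u = \<pi> j \<longrightarrow>
            (\<forall>ms mt. is_image C u s ms \<and> is_image C u t mt \<longrightarrow> same_subobject C ms mt)"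
  have H': "\<forall>i < n. \<forall>j < n. \<forall>Q p q u. binary_product C (A i) (A j) Q p q \<and> u \<in> hom C P Q \<and>
            Cmp C p u = \<pi> i \<and> Cmp C q u = \<pi> j \<longrightarrow>
            (\<forall>ms mt. is_image C u t ms \<and> is_image C u s mt \<longrightarrow> same_subobject C ms mt)"
  proof (intro allI impI)
    fix i j Q p q u m1 m2
    assume i: "i < n" and j: "j < n"
      and b: "binary_product C (A i) (A j) Q p q \<and> u \<in> hom C P Q \<and> Cmp C p u = \<pi> i \<and> Cmp C q u = \<pi> j"
      and im: "is_image C u t m1 \<and> is_image C u s m2"
    have "same_subobject C m2 m1" using H[rule_format, OF i j b, of m2 m1] im by simp
    then show "same_subobject C m1 m2" by (rule same_sym)
  qed
  have R: "regcat C" using assms(1) by (rule regcat.intro)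
  have S1: "subsetting C n A P \<pi> s t"
    using R subsetting_axioms.intro[OF np ms cs mt ct H assms(2) npos] by (rule subsetting.intro)
  have S2: "subsetting C n A P \<pi> t s"
    using R subsetting_axioms.intro[OF np mt ct ms cs H' assms(2) npos] by (rule subsetting.intro)
  obtain k1 where k1: "k1 \<in> hom C (Dom C s) (Dom C t)" "Cmp C t k1 = s" using subsetting.le_sub[OF S1] by blast
  obtain k2 where k2: "k2 \<in> hom C (Dom C t) (Dom C s)" "Cmp C s k2 = t" using subsetting.le_sub[OF S2] by blast
  show "same_subobject C s t" unfolding same_subobject_def
  proof (intro conjI)
    show "\<exists>u. u \<in> hom C (Dom C s) (Dom C t) \<and> Cmp C t u = s" using k1 by blast
    show "\<exists>v. v \<in> hom C (Dom C t) (Dom C s) \<and> Cmp C s v = t" using k2 by blast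
  qed (use ms mt cs ct in simp_all)
qed

end
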